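(* Fix $(\vartheta,\kappa)\in(0,1)^2$ with $\kappa>1-\vartheta$, $r>0$, $a\ge1$, an integer $m_0\ge1$ and $c_0>0$; let $g=g(m_0,\vartheta,r)$. Consider $Y=X\beta+\sigma z$ with $\beta$ following ARW$(\vartheta,r,a,\mu)$ and $X$ following RD$(\vartheta,\kappa,\Omega)$, with $\Omega\in\mathcal M_p(c_0,g)$ for sufficiently large $p$. For each $1\le j\le p$ let $(V_{0j}^*,V_{1j}^* )$ be the minimizing pair of $\eta(V_0,V_1)$ over $\{(V_0,V_1):j\in V_0\cup V_1\}$ (ties broken lexicographically). Then $\max_{1\le j\le p}|V_{0j}^*\cup V_{1j}^*|\le(\vartheta+r)^2/(2\vartheta r)$.
   Context: $Y=X\beta+\sigma z\in\mathbb R^n$, $X$ is $n\times p$, $z\sim N(0,I_n)$, $\sigma>0$ known. RD$(\vartheta,\kappa,\Omega)$: $n=p^\kappa$, rows of $X$ i.i.d. $N(0,\frac1n\Omega)$, $\Omega$ a correlation matrix. ARW$(\vartheta,r,a,\mu)$: $\epsilon_p=p^{-\vartheta}$, $\tau_p=\sigma\sqrt{2r\log p}$, $b$ i.i.d. Bernoulli$(\epsilon_p)$ independent of $(X,z)$, $\beta=b\circ\mu$, $\mu\in\Theta_p^*(\tau_p,a):=\{\mu:\tau_p\le|\mu_i|\le a\tau_p\ \forall i\}$. $\lambda_k^*(\Omega)$: minimal smallest eigenvalue of $k\times k$ principal submatrices; $g(m_0,\vartheta,r)$ is the smallest integer $\ge\max\{m_0,(\vartheta+r)^2/(2\vartheta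 r)\}$; $\mathcal M_p(c_0,g)$: correlation matrices with $\lambda_g^*(\Omega)\ge c_0$. For $V\subset\{1..p\}$ with indicator $I_V$, $B_V=\{I_V\circ\mu:\mu\in\Theta_p^*(\tau_p,a)\}$; $\alpha(\theta^{(0)},\theta^{(1)})=\tau_p^{-2}(\theta^{(0)}-\theta^{(1)})'\Omega(\theta^{(0)}-\theta^{(1)})$; $\alpha^*(V_0,V_1)=\min\{\alpha:\theta^{(i)}\in B_{V_i},\ \mathrm{sgn}(\theta^{(0)})\ne\mathrm{sgn}(\theta^{(1)})\}$; $\eta(V_0,V_1)=\max\{|V_0|,|V_1|\}\vartheta+\frac14[(\sqrt{\alpha^*r}-||V_1|-|V_0||\vartheta/\sqrt{\alpha^*r})_+]^2$ with $\alpha^*=\alpha^*(V_0,V_1)$ and $x_+=\max(x,0)$. *)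

theory Defs
  imports Complex_Main
begin

text \<open>Indices are 1..p; vectors are functions nat => real, matrices nat => nat => real.\<close>

definition qform :: "nat \<Rightarrow> (nat \<Rightarrow> nat \<Rightarrow> real) \<Rightarrow> (nat \<Rightarrow> real) \<Rightarrow> real" where
  "qform p \<Omega> x = (\<Sum>i\<in>{1..p}. \<Sum>j\<in>{1..p}. x i * \<Omega> i j * x j)"

definition correlation_matrix :: "nat \<Rightarrow> (nat \<Rightarrow> nat \<Rightarrow> real) \<Rightarrow> bool" where
  "correlation_matrix p \<Omega> \<longleftrightarrow>
     (\<forall>i\<in>{1..p}. \<forall>j\<in>{1..p}. \<Omega> i j = \<Omega> j i) \<and>
     (\<forall>i\<in>{1..p}. \<Omega> i i = 1) \<and>
     (\<forall>x. qform p \<Omega> x \<ge> 0)"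

definition eigvals_sub :: "(nat \<Rightarrow> nat \<Rightarrow> real) \<Rightarrow> nat set \<Rightarrow> real set" where
  "eigvals_sub \<Omega> S = {l. \<exists>x::nat \<Rightarrow> real. (\<forall>i. i \<notin> S \<longrightarrow> x i = 0) \<and> (\<exists>i\<in>S. x i \<noteq> 0) \<and>
       (\<forall>i\<in>S. (\<Sum>j\<in>S. \<Omega> i j * x j) = l * x i)}"

definition lambda_min_sub :: "(nat \<Rightarrow> nat \<Rightarrow> real) \<Rightarrow> nat set \<Rightarrow> real" where
  "lambda_min_sub \<Omega> S = Min (eigvals_sub \<Omega> S)"

definition lambda_star :: "nat \<Rightarrow> (nat \<Rightarrow> nat \<Rightarrow> real) \<Rightarrow> nat \<Rightarrow> real" where
  "lambda_star p \<Omega> k = Min {lambda_min_sub \<Omega> S | S. S \<subseteq> {1..p} \<and> card S = k}"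

definition M_p :: "nat \<Rightarrow> real \<Rightarrow> nat \<Rightarrow> (nat \<Rightarrow> nat \<Rightarrow> real) set" where
  "M_p p c0 g = {\<Omega>. correlation_matrix p \<Omega> \<and> lambda_star p \<Omega> g \<ge> c0}"

definition g_fun :: "nat \<Rightarrow> real \<Rightarrow> real \<Rightarrow> nat" where
  "g_fun m0 \<theta> r = nat \<lceil>max (real m0) ((\<theta> + r)\<^sup>2 / (2 * \<theta> * r))\<rceil>"

definition Theta_star :: "nat \<Rightarrow> real \<Rightarrow> real \<Rightarrow> (nat \<Rightarrow> real) set" where
  "Theta_star p \<tau> a = {\<mu>. \<forall>i\<in>{1..p}. \<tau> \<le> \<bar>\<mu> i\<bar> \<and> \<bar>\<mu> i\<bar> \<le> a * \<tau>}"

definition B_set :: "nat \<Rightarrow> real \<Rightarrow> real \<Rightarrow> nat set \<Rightarrow> (nat \<Rightarrow> real) set" where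
  "B_set p \<tau> a V = {(\<lambda>i. if i \<in> V then \<mu> i else 0) | \<mu>. \<mu> \<in> Theta_star p \<tau> a}"

definition alpha :: "nat \<Rightarrow> (nat \<Rightarrow> nat \<Rightarrow> real) \<Rightarrow> real \<Rightarrow> (nat \<Rightarrow> real) \<Rightarrow> (nat \<Rightarrow> real) \<Rightarrow> real" where
  "alpha p \<Omega> \<tau> \<theta>0 \<theta>1 = qform p \<Omega> (\<lambda>i. \<theta>0 i - \<theta>1 i) / \<tau>\<^sup>2"

definition alpha_star :: "nat \<Rightarrow> (nat \<Rightarrow> nat \<Rightarrow> real) \<Rightarrow> real \<Rightarrow> real \<Rightarrow> nat set \<Rightarrow> nat set \<Rightarrow> real" where
  "alpha_star p \<Omega> \<tau> a V0 V1 = Inf {alpha p \<Omega> \<tau> \<theta>0 \<theta>1 | \<theta>0 \<theta>1.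
       \<theta>0 \<in> B_set p \<tau> a V0 \<and> \<theta>1 \<in> B_set p \<tau> a V1 \<and> (\<lambda>i. sgn (\<theta>0 i)) \<noteq> (\<lambda>i. sgn (\<theta>1 i))}"

definition eta :: "nat \<Rightarrow> (nat \<Rightarrow> nat \<Rightarrow> real) \<Rightarrow> real \<Rightarrow> real \<Rightarrow> real \<Rightarrow> real \<Rightarrow> nat set \<Rightarrow> nat set \<Rightarrow> real" where
  "eta p \<Omega> \<tau> a \<theta> r V0 V1 =
     (let A = alpha_star p \<Omega> \<tau> a V0 V1;
          d = \<bar>real (card V1) - real (card V0)\<bar>
      in real (max (card V0) (card V1)) * \<theta>
         + (1/4) * (max 0 (sqrt (A * r) - d * \<theta> / sqrt (A * r)))\<^sup>2)"

definition tau_p :: "real \<Rightarrow> real \<Rightarrow> nat \<Rightarrow> real" where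
  "tau_p \<sigma> r p = \<sigma> * sqrt (2 * r * ln (real p))"

definition pairs_j :: "nat \<Rightarrow> nat \<Rightarrow> (nat set \<times> nat set) set" where
  "pairs_j p j = {(V0, V1). V0 \<subseteq> {1..p} \<and> V1 \<subseteq> {1..p} \<and> j \<in> V0 \<union> V1}"

end

theory Submission
  imports Defs
begin

lemma alpha_single:
  fixes \<Omega> :: "nat \<Rightarrow> nat \<Rightarrow> real"
  assumes cm: "correlation_matrix p \<Omega>" and j: "j \<in> {1..p}" and tau: "\<tau> > 0" and a: "a \<ge> 1"
  shows "alpha_star p \<Omega> \<tau> a {j} {} = 1"
proof -
  let ?S = "{alpha p \<Omega> \<tau> \<theta>0 \<theta>1 | \<theta>0 \<theta>1.
       \<theta>0 \<in> B_set p \<tau> a {j} \<and> \<theta>1 \<in> B_set p \<tau> a {} \<and> (\<lambda>i. sgn (\<theta>0 i)) \<noteq> (\<lambda>i. sgn (\<theta>1 i))}"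
  have Ojj: "\<Omega> j j = 1" using cm j unfolding correlation_matrix_def by auto
  have qf: "qform p \<Omega> (\<lambda>i. (if i = j then c else 0) - 0) = c^2" for c
  proof -
    have inner: "(\<Sum>k\<in>{1..p}. (if i = j then c else 0) * \<Omega> i k * (if k = j then c else 0))
        = (if i = j then c * \<Omega> j j * c else 0)" for i
    proof (cases "i = j")
      case True
      have "(\<Sum>k\<in>{1..p}. (if i = j then c else 0) * \<Omega> i k * (if k = j then c else 0))
          = (\<Sum>k\<in>{1..p}. (if k = j then c * \<Omega> j j * c else 0))"
        using True by (intro sum.cong) auto
      also have "\<dots> = c * \<Omega> j j * c" using j by (simp add: sum.delta)
      finally show ?thesis using True by simp
    qed simp
    have "qform p \<Omega> (\<lambda>i. (if i = j then c else 0) - 0)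
        = (\<Sum>i\<in>{1..p}. (if i = j then c * \<Omega> j j * c else 0))"
      unfolding qform_def using inner by simp
    also have "\<dots> = c * \<Omega> j j * c" using j by (simp add: sum.delta)
    finally show ?thesis using Ojj by (simp add: power2_eq_square)
  qed
  have B0: "B_set p \<tau> a {} = {\<lambda>i. 0}"
    unfolding B_set_def Theta_star_def using tau a
    by (auto intro!: exI[of _ "\<lambda>i. \<tau>"])
  have mem: "1 \<in> ?S"
  proof -
    have "(\<lambda>i. if i \<in> {j} then \<tau> else 0) \<in> B_set p \<tau> a {j}"
      unfolding B_set_def Theta_star_def using tau a by (auto intro!: exI[of _ "\<lambda>i. \<tau>"])
    moreover have "(\<lambda>i. 0::real) \<in> B_set p \<tau> a {}" using B0 by simp
    moreover have "(\<lambda>i. sgn ((\<lambda>i. if i \<in> {j} then \<tau> else 0) i)) \<noteq> (\<lambda>i. sgn ((\<lambda>i. 0::real) i))"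
      using tau by (auto dest: fun_cong[of _ _ j])
    moreover have "alpha p \<Omega> \<tau> (\<lambda>i. if i \<in> {j} then \<tau> else 0) (\<lambda>i. 0) = 1"
      unfolding alpha_def using qf[of \<tau>] tau by simp
    ultimately show ?thesis
      by (intro CollectI exI[of _ "\<lambda>i. if i \<in> {j} then \<tau> else 0"] exI[of _ "\<lambda>i. 0::real"]) simp
  qed
  have low: "1 \<le> x" if "x \<in> ?S" for x
  proof -
    from that obtain \<theta>0 \<theta>1 where x: "x = alpha p \<Omega> \<tau> \<theta>0 \<theta>1"
      and h0: "\<theta>0 \<in> B_set p \<tau> a {j}" and h1: "\<theta>1 \<in> B_set p \<tau> a {}" by blast
    from h0 obtain \<mu> where mu: "\<mu> \<in> Theta_star p \<tau> a" and t0: "\<theta>0 = (\<lambda>i. if i \<in> {j} then \<mu> i else 0)"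
      unfolding B_set_def by blast
    have t1: "\<theta>1 = (\<lambda>i. 0)" using h1 B0 by simp
    have ge: "\<tau> \<le> \<bar>\<mu> j\<bar>" using mu j unfolding Theta_star_def by auto
    have "\<tau>^2 \<le> (\<mu> j)^2" using ge tau
      by (metis abs_of_pos power2_abs power_mono less_imp_le)
    moreover have "\<theta>0 = (\<lambda>i. if i = j then \<mu> j else 0)" using t0 by auto
    ultimately show ?thesis using x t1 qf[of "\<mu> j"] tau unfolding alpha_def
      by simp
  qed
  show ?thesis unfolding alpha_star_def
    by (rule cInf_eq_minimum[OF mem low])
qed

theorem lemma22:
  fixes \<theta> \<kappa> r a c0 \<sigma> :: real and m0 :: nat
  assumes "0 < \<theta>" "\<theta> < 1" "0 < \<kappa>" "\<kappa> < 1" "\<kappa> > 1 - \<theta>"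
    and "r > 0" "a \<ge> 1" "m0 \<ge> 1" "c0 > 0" "\<sigma> > 0"
  shows "\<exists>P. \<forall>p \<ge> P. \<forall>\<Omega> \<in> M_p p c0 (g_fun m0 \<theta> r).
           \<forall>Vstar :: nat \<Rightarrow> nat set \<times> nat set.
             (\<forall>j\<in>{1..p}. Vstar j \<in> pairs_j p j \<and>
                (\<forall>W \<in> pairs_j p j.
                   eta p \<Omega> (tau_p \<sigma> r p) a \<theta> r (fst (Vstar j)) (snd (Vstar j))
                   \<le> eta p \<Omega> (tau_p \<sigma> r p) a \<theta> r (fst W) (snd W)))
             \<longrightarrow> real (Max ((\<lambda>j. card (fst (Vstar j) \<union> snd (Vstar j))) ` {1..p}))
                 \<le> (\<theta> + r)\<^sup>2 / (2 * \<theta> * r)"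
proof (intro exI[of _ 2] allI impI ballI)
  fix p :: nat and \<Omega> and Vstar :: "nat \<Rightarrow> nat set \<times> nat set"
  assume p: "2 \<le> p" and Om: "\<Omega> \<in> M_p p c0 (g_fun m0 \<theta> r)"
  assume H: "\<forall>j\<in>{1..p}. Vstar j \<in> pairs_j p j \<and>
                (\<forall>W \<in> pairs_j p j.
                   eta p \<Omega> (tau_p \<sigma> r p) a \<theta> r (fst (Vstar j)) (snd (Vstar j))
                   \<le> eta p \<Omega> (tau_p \<sigma> r p) a \<theta> r (fst W) (snd W))"
  have th: "0 < \<theta>" and rp: "0 < r" using assms by auto
  have cm: "correlation_matrix p \<Omega>" using Om unfolding M_p_def by auto
  let ?\<tau> = "tau_p \<sigma> r p"
  have tau: "?\<tau> > 0" unfolding tau_p_def using p assms by simp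
  define m where "m = max 0 (sqrt r - \<theta> / sqrt r)"
  have key: "\<theta> + 1/4 * m^2 \<le> (\<theta> + r)\<^sup>2 / (4 * r)"
  proof (cases "sqrt r - \<theta> / sqrt r \<ge> 0")
    case True
    hence "m^2 = (sqrt r - \<theta> / sqrt r)^2" unfolding m_def by simp
    also have "\<dots> = r - 2*\<theta> + \<theta>^2 / r" using rp
      by (simp add: power2_eq_square field_simps)
    finally have "\<theta> + 1/4 * m^2 = (\<theta> + r)\<^sup>2 / (4 * r)" using rp
      by (simp add: power2_eq_square field_simps)
    thus ?thesis by simp
  next
    case False
    hence "m = 0" unfolding m_def by simp
    moreover have "4*r*\<theta> \<le> (\<theta> + r)\<^sup>2"
      using sum_squares_ge_zero[of "\<theta> - r" 0] by (simp add: power2_eq_square algebra_simps)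
    ultimately show ?thesis using rp by (simp add: field_simps)
  qed
  have bnd: "real (card (fst (Vstar j) \<union> snd (Vstar j))) \<le> (\<theta> + r)\<^sup>2 / (2 * \<theta> * r)"
    if j: "j \<in> {1..p}" for j
  proof -
    obtain V0 V1 where V: "Vstar j = (V0, V1)" by fastforce
    have W: "({j}, {}) \<in> pairs_j p j" using j unfolding pairs_j_def by auto
    have le: "eta p \<Omega> ?\<tau> a \<theta> r V0 V1 \<le> eta p \<Omega> ?\<tau> a \<theta> r {j} {}"
      using H j W V by fastforce
    have A: "alpha_star p \<Omega> ?\<tau> a {j} {} = 1"
      using alpha_single[OF cm j tau assms(7)] .
    have ej: "eta p \<Omega> ?\<tau> a \<theta> r {j} {} = \<theta> + 1/4 * m^2"
      unfolding eta_def Let_def A m_def by simp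
    have e0: "real (max (card V0) (card V1)) * \<theta> \<le> eta p \<Omega> ?\<tau> a \<theta> r V0 V1"
      unfolding eta_def Let_def by simp
    have c: "real (card (V0 \<union> V1)) \<le> 2 * real (max (card V0) (card V1))"
      using card_Un_le[of V0 V1] by (simp add: max_def)
    have "real (card (V0 \<union> V1)) * \<theta> \<le> 2 * ((\<theta> + r)\<^sup>2 / (4 * r))"
      using mult_right_mono[OF c, of \<theta>] th e0 le ej key by linarith
    hence "real (card (V0 \<union> V1)) * \<theta> \<le> (\<theta> + r)\<^sup>2 / (2 * r)" by simp
    hence "real (card (V0 \<union> V1)) \<le> (\<theta> + r)\<^sup>2 / (2 * r) / \<theta>"
      using th by (simp only: pos_le_divide_eq[OF th])
    also have "\<dots> = (\<theta> + r)\<^sup>2 / (2 * \<theta> * r)" by (simp add: field_simps)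
    finally show ?thesis using V by simp
  qed
  have ne: "(\<lambda>j. card (fst (Vstar j) \<union> snd (Vstar j))) ` {1..p} \<noteq> {}" using p by auto
  obtain j where "j \<in> {1..p}" and "Max ((\<lambda>j. card (fst (Vstar j) \<union> snd (Vstar j))) ` {1..p})
      = card (fst (Vstar j) \<union> snd (Vstar j))"
    using Max_in[OF _ ne] by auto
  thus "real (Max ((\<lambda>j. card (fst (Vstar j) \<union> snd (Vstar j))) ` {1..p}))
                 \<le> (\<theta> + r)\<^sup>2 / (2 * \<theta> * r)" using bnd by simp
qed

end
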